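(* Let $q\ge1$ and let $A=(a_{ijk})_{i,j\le n,k\le m}$ be a real array. Then $\mathbb{E}\varphi_A(E_n)\le C(q)\sqrt{W_A}$, where $C(q)$ depends only on $q$.
   Context: $E_n=(\mathcal E_1,\dots,\mathcal E_n)$ has i.i.d. standard symmetric exponential coordinates. $W_A=\big(\sum_k(\sum_{i,j}a_{ijk}^2)^{q/2}\big)^{1/q}$ and $\varphi_A(x)=\Big(\sum_k\Big(\sum_i\frac{(\sum_ja_{ijk}x_j)^4}{\sum_ja_{ijk}^2}\Big)^{q/2}\Big)^{1/(2q)}$ for $x\in\mathbb{R}^n$, terms with $\sum_ja_{ijk}^2=0$ being omitted. *)

theory Defs
  imports "HOL-Probability.Probability"
begin

definition sym_exp :: "real measure" where
  "sym_exp = density lborel (\<lambda>x. ennreal (exp (- \<bar>x\<bar>) / 2))"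

text \<open>Law of E_n = (E_1,...,E_n), i.i.d. coordinates indexed by {..<n}.\<close>
definition E_law :: "nat \<Rightarrow> (nat \<Rightarrow> real) measure" where
  "E_law n = PiM {..<n} (\<lambda>_. sym_exp)"

text \<open>Array a i j k with i,j < n, k < m.\<close>
definition W_A :: "real \<Rightarrow> nat \<Rightarrow> nat \<Rightarrow> (nat \<Rightarrow> nat \<Rightarrow> nat \<Rightarrow> real) \<Rightarrow> real" where
  "W_A q n m a = (\<Sum>k<m. (\<Sum>i<n. \<Sum>j<n. (a i j k)^2) powr (q/2)) powr (1/q)"

definition phi_A :: "real \<Rightarrow> nat \<Rightarrow> nat \<Rightarrow> (nat \<Rightarrow> nat \<Rightarrow> nat \<Rightarrow> real) \<Rightarrow> (nat \<Rightarrow> real) \<Rightarrow> real" where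
  "phi_A q n m a x = (\<Sum>k<m. (\<Sum>i\<in>{i. i < n \<and> (\<Sum>j<n. (a i j k)^2) \<noteq> 0}.
       (\<Sum>j<n. a i j k * x j)^4 / (\<Sum>j<n. (a i j k)^2)) powr (q/2)) powr (1/(2*q))"

end

theory Submission
  imports Defs
begin

lemma sets_sym_exp[measurable_cong]: "sets sym_exp = sets borel"
  by (simp add: sym_exp_def)

lemma exp_int_pos:
  fixes c :: real assumes "c > 0"
  shows "(\<integral>\<^sup>+x. ennreal (exp (-(c*x)) * indicator {0..} x / 2) \<partial>lborel) = ennreal (1/(2*c))"
proof -
  have "(\<integral>\<^sup>+x. ennreal (exp (-(c*x)) * indicator {0..} x / 2) \<partial>lborel)
     = (\<integral>\<^sup>+x. ennreal (1/(2*c)) * ennreal (erlang_density 0 c x * x ^ 0) \<partial>lborel)"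
  proof (intro nn_integral_cong)
    fix x :: real
    show "ennreal (exp (-(c*x)) * indicator {0..} x / 2) = ennreal (1/(2*c)) * ennreal (erlang_density 0 c x * x ^ 0)"
      apply (subst ennreal_mult''[symmetric])
      using assms apply simp
      apply (rule arg_cong[where f=ennreal])
      using assms by (simp add: erlang_density_def indicator_def field_simps)
  qed
  also have "\<dots> = ennreal (1/(2*c)) * (\<integral>\<^sup>+ x. ennreal (erlang_density 0 c x * x ^ 0) \<partial>lborel)"
    by (intro nn_integral_cmult) auto
  also have "(\<integral>\<^sup>+ x. ennreal (erlang_density 0 c x * x ^ 0) \<partial>lborel) = 1"
    using nn_integral_erlang_ith_moment[of c 0 0] assms by simp
  finally show ?thesis by simp
qed

lemma sym_exp_mgf:
  fixes s :: real assumes "\<bar>s\<bar> < 1"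
  shows "(\<integral>\<^sup>+x. ennreal (exp (s*x)) \<partial>sym_exp) \<le> ennreal (1/(1-s^2))"
proof -
  have "(\<integral>\<^sup>+x. ennreal (exp (s*x)) \<partial>sym_exp) = (\<integral>\<^sup>+x. ennreal (exp (- \<bar>x\<bar>) / 2) * ennreal (exp (s*x)) \<partial>lborel)"
    unfolding sym_exp_def by (subst nn_integral_density) auto
  also have "\<dots> \<le> (\<integral>\<^sup>+x. ennreal (exp (-((1-s)*x)) * indicator {0..} x / 2)
                   + ennreal (exp (-((1+s)*(-x))) * indicator {0..} (-x) / 2) \<partial>lborel)"
  proof (intro nn_integral_mono)
    fix x :: real
    have "exp (- \<bar>x\<bar>) / 2 * exp (s*x) \<le> exp (-((1-s)*x)) * indicator {0..} x / 2
                   + exp (-((1+s)*(-x))) * indicator {0..} (-x) / 2"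
        by (cases "x \<ge> 0") (auto simp: mult_exp_exp algebra_simps indicator_def)
    then show "ennreal (exp (- \<bar>x\<bar>) / 2) * ennreal (exp (s*x)) \<le> ennreal (exp (-((1-s)*x)) * indicator {0..} x / 2)
                   + ennreal (exp (-((1+s)*(-x))) * indicator {0..} (-x) / 2)"
      by (subst ennreal_mult''[symmetric], simp, subst ennreal_plus[symmetric], simp, simp, rule ennreal_leI)
  qed
  also have "\<dots> = (\<integral>\<^sup>+x. ennreal (exp (-((1-s)*x)) * indicator {0..} x / 2) \<partial>lborel)
         + (\<integral>\<^sup>+x. ennreal (exp (-((1+s)*(-x))) * indicator {0..} (-x) / 2) \<partial>lborel)"
    by (subst nn_integral_add) auto
  also have "(\<integral>\<^sup>+x. ennreal (exp (-((1+s)*(-x))) * indicator {0..} (-x) / 2) \<partial>lborel)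
      = (\<integral>\<^sup>+x. ennreal (exp (-((1+s)*x)) * indicator {0..} x / 2) \<partial>lborel)"
    by (subst nn_integral_real_affine[where c="-1" and t=0]) auto
  also have "\<dots> = ennreal (1/(2*(1+s)))" using assms by (intro exp_int_pos) auto
  also have "(\<integral>\<^sup>+x. ennreal (exp (-((1-s)*x)) * indicator {0..} x / 2) \<partial>lborel) = ennreal (1/(2*(1-s)))"
    using assms by (intro exp_int_pos) auto
  also have "ennreal (1/(2*(1-s))) + ennreal (1/(2*(1+s))) = ennreal (1/(2*(1-s)) + 1/(2*(1+s)))"
    using assms by (subst ennreal_plus) auto
  also have "1/(2*(1-s)) + 1/(2*(1+s)) = 1/(1-s^2)"
  proof -
    have "s^2 < 1" using assms by (simp add: abs_square_less_1)
    then show ?thesis using assms by (simp add: field_simps power2_eq_square)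
  qed
  finally show ?thesis .
qed

lemma sym_exp_total: "emeasure sym_exp (space sym_exp) \<le> 1"
proof -
  have "emeasure sym_exp (space sym_exp) = (\<integral>\<^sup>+x. ennreal (exp (0*x)) \<partial>sym_exp)" by simp
  also have "\<dots> \<le> ennreal (1/(1-0^2))" by (rule sym_exp_mgf) simp
  finally show ?thesis by simp
qed

lemma sym_exp_finite: "finite_measure sym_exp"
  using sym_exp_total by (intro finite_measureI) (auto simp: top_unique)

lemma product_sym: "product_sigma_finite (\<lambda>_. sym_exp)"
  unfolding product_sigma_finite_def
  using sym_exp_finite by (simp add: finite_measure.axioms(1))

lemma E_law_total: "emeasure (E_law n) (space (E_law n)) \<le> 1"
proof -
  interpret product_sigma_finite "\<lambda>_::nat. sym_exp" by (rule product_sym)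
  have "emeasure (E_law n) (space (E_law n)) = (\<integral>\<^sup>+x. (\<Prod>j\<in>{..<n}. (\<lambda>_. 1) (x j)) \<partial>E_law n)"
    by simp
  also have "\<dots> = (\<Prod>j\<in>{..<n}. integral\<^sup>N sym_exp (\<lambda>_. 1))"
    unfolding E_law_def by (rule product_nn_integral_prod) auto
  also have "\<dots> \<le> (\<Prod>j\<in>{..<n}. 1)"
    by (intro prod_mono_ennreal) (use sym_exp_total in simp)
  finally show ?thesis by simp
qed

lemma recip_le_exp: fixes u :: real assumes "0 \<le> u" "u \<le> 1/2"
  shows "1/(1-u) \<le> exp (2*u)"
proof -
  have "1 \<le> (1-u)*(1+2*u)" proof -
    have "u * (2*u) \<le> u * 1" using assms by (intro mult_left_mono) auto
    then show ?thesis by (simp add: algebra_simps)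
  qed
  also have "\<dots> \<le> (1-u) * exp (2*u)" using assms by (intro mult_left_mono) (auto simp: exp_ge_add_one_self)
  finally show ?thesis using assms by (simp add: field_simps)
qed

lemma E_law_mgf:
  fixes t :: real and b :: "nat \<Rightarrow> real"
  assumes "t^2 \<le> 1/4" "(\<Sum>j<n. (b j)^2) \<le> 1"
  shows "(\<integral>\<^sup>+x. ennreal (exp (t * (\<Sum>j<n. b j * x j))) \<partial>E_law n) \<le> ennreal (exp (1/2))"
proof -
  interpret product_sigma_finite "\<lambda>_::nat. sym_exp" by (rule product_sym)
  have bj: "(b j)^2 \<le> 1" if "j < n" for j
  proof -
    have "(b j)^2 \<le> (\<Sum>j<n. (b j)^2)" using that by (intro member_le_sum) auto
    then show ?thesis using assms by simp
  qed
  have u: "(t * b j)^2 \<le> 1/4" if "j < n" for j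
  proof -
    have "(t * b j)^2 = t^2 * (b j)^2" by (simp add: power_mult_distrib)
    also have "\<dots> \<le> 1/4 * 1" using assms bj[OF that] by (intro mult_mono) auto
    finally show ?thesis by simp
  qed
  have "(\<integral>\<^sup>+x. ennreal (exp (t * (\<Sum>j<n. b j * x j))) \<partial>E_law n)
      = (\<integral>\<^sup>+x. (\<Prod>j\<in>{..<n}. (\<lambda>y. ennreal (exp ((t * b j) * y))) (x j)) \<partial>E_law n)"
    by (intro nn_integral_cong) (simp add: prod_ennreal exp_sum sum_distrib_left mult.assoc)
  also have "\<dots> = (\<Prod>j\<in>{..<n}. (\<integral>\<^sup>+y. ennreal (exp ((t * b j) * y)) \<partial>sym_exp))"
    unfolding E_law_def by (rule product_nn_integral_prod) auto
  also have "\<dots> \<le> (\<Prod>j\<in>{..<n}. ennreal (exp (2 * (t * b j)^2)))"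
  proof (intro prod_mono_ennreal)
    fix j assume "j \<in> {..<n}"
    then have uj: "(t * b j)^2 \<le> 1/4" using u by simp
    have "\<bar>t * b j\<bar> < 1"
    proof -
      have "\<bar>t * b j\<bar>^2 < 1^2" using uj by simp
      then show ?thesis by (rule power_less_imp_less_base) simp
    qed
    then have "(\<integral>\<^sup>+y. ennreal (exp ((t * b j) * y)) \<partial>sym_exp) \<le> ennreal (1/(1-(t*b j)^2))"
      by (rule sym_exp_mgf)
    also have "\<dots> \<le> ennreal (exp (2 * (t * b j)^2))"
      using uj by (intro ennreal_leI recip_le_exp) auto
    finally show "(\<integral>\<^sup>+y. ennreal (exp ((t * b j) * y)) \<partial>sym_exp) \<le> ennreal (exp (2 * (t * b j)^2))" .
  qed
  also have "\<dots> = ennreal (exp (2 * t^2 * (\<Sum>j<n. (b j)^2)))"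
    by (simp add: prod_ennreal exp_sum[symmetric] sum_distrib_left power_mult_distrib mult.assoc)
  also have "\<dots> \<le> ennreal (exp (1/2))"
  proof (intro ennreal_leI)
    have "2 * t^2 * (\<Sum>j<n. (b j)^2) \<le> 2 * (1/4) * 1"
      using assms by (intro mult_mono) (auto simp: sum_nonneg)
    then show "exp (2 * t^2 * (\<Sum>j<n. (b j)^2)) \<le> exp (1/2)" by simp
  qed
  finally show ?thesis .
qed

lemma pow_le_exp: fixes z :: real assumes "0 \<le> z" shows "z^K / fact K \<le> exp z"
proof -
  have "(\<Sum>n\<in>{K}. z^n /\<^sub>R fact n) \<le> (\<Sum>n. z^n /\<^sub>R fact n)"
    using assms exp_converges[of z] by (intro sum_le_suminf) (auto simp: sums_iff)
  also have "\<dots> = exp z" using exp_converges[of z] by (simp add: sums_iff)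
  finally show ?thesis by (simp add: divide_inverse_commute)
qed

lemma pow_le_exps: fixes y :: real
  shows "y^K \<le> 2^K * fact K * (exp ((1/2) * y) + exp ((-1/2) * y))"
proof -
  have "y^K \<le> \<bar>y\<bar>^K" by (metis abs_ge_self power_abs)
  also have "\<dots> = 2^K * (\<bar>y\<bar>/2)^K" by (simp add: power_divide)
  also have "(\<bar>y\<bar>/2)^K \<le> fact K * exp (\<bar>y\<bar>/2)"
    using pow_le_exp[of "\<bar>y\<bar>/2" K] by (simp add: field_simps)
  also have "exp (\<bar>y\<bar>/2) \<le> exp ((1/2) * y) + exp ((-1/2) * y)"
    by (cases "y \<ge> 0") (auto simp: add_increasing add_increasing2)
  finally show ?thesis by (simp add: mult_left_mono mult.assoc)
qed

lemma E_law_moment: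
  fixes b :: "nat \<Rightarrow> real" and K :: nat
  assumes "(\<Sum>j<n. (b j)^2) \<le> 1"
  shows "(\<integral>\<^sup>+x. ennreal ((\<Sum>j<n. b j * x j)^K) \<partial>E_law n) \<le> ennreal (2^K * fact K * (2 * exp (1/2)))"
proof -
  let ?c = "2^K * fact K :: real"
  have "(\<integral>\<^sup>+x. ennreal ((\<Sum>j<n. b j * x j)^K) \<partial>E_law n)
     \<le> (\<integral>\<^sup>+x. ennreal ?c * (ennreal (exp ((1/2) * (\<Sum>j<n. b j * x j))) + ennreal (exp ((-1/2) * (\<Sum>j<n. b j * x j)))) \<partial>E_law n)"
  proof (intro nn_integral_mono)
    fix x :: "nat \<Rightarrow> real"
    show "ennreal ((\<Sum>j<n. b j * x j)^K) \<le> ennreal ?c * (ennreal (exp ((1/2) * (\<Sum>j<n. b j * x j))) + ennreal (exp ((-1/2) * (\<Sum>j<n. b j * x j))))"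
      by (subst ennreal_plus[symmetric], simp, simp, subst ennreal_mult''[symmetric], simp, rule ennreal_leI, rule pow_le_exps)
  qed
  also have "\<dots> = ennreal ?c * ((\<integral>\<^sup>+x. ennreal (exp ((1/2) * (\<Sum>j<n. b j * x j))) \<partial>E_law n) + (\<integral>\<^sup>+x. ennreal (exp ((-1/2) * (\<Sum>j<n. b j * x j))) \<partial>E_law n))"
    unfolding E_law_def by (subst nn_integral_cmult) (auto simp: nn_integral_add)
  also have "\<dots> \<le> ennreal ?c * (ennreal (exp (1/2)) + ennreal (exp (1/2)))"
    using assms by (intro mult_left_mono add_mono E_law_mgf) (auto simp: power2_eq_square)
  also have "\<dots> = ennreal (?c * (2 * exp (1/2)))"
    by (simp add: ennreal_mult''[symmetric] ennreal_plus[symmetric] del: ennreal_plus)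
  finally show ?thesis .
qed

lemma convex_pow_nonneg: "convex_on {0::real..} (\<lambda>x. x^N)"
proof (cases "even N")
  case True
  then show ?thesis using convex_on_subset[OF convex_power_even[OF True]] by auto
next
  case False
  then show ?thesis using convex_power_odd[of N] by simp
qed

lemma jensen_pow:
  fixes w Z :: "nat \<Rightarrow> real"
  assumes "finite I" "I \<noteq> {}" "(\<Sum>i\<in>I. w i) = 1" "\<And>i. i \<in> I \<Longrightarrow> 0 \<le> w i" "\<And>i. i \<in> I \<Longrightarrow> 0 \<le> Z i"
  shows "(\<Sum>i\<in>I. w i * Z i)^N \<le> (\<Sum>i\<in>I. w i * (Z i)^N)"
  using convex_on_sum[OF assms(1,2) convex_pow_nonneg assms(3), of Z] assms by simp

lemma powr_le_1_pow:
  fixes V p :: real assumes "0 \<le> V" "0 < p" "p \<le> real N"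
  shows "V powr p \<le> 1 + V^N"
proof (cases "V \<le> 1")
  case True
  then have "V powr p \<le> 1" using assms by (cases "V = 0") (auto intro: powr_le1)
  then show ?thesis using assms by (simp add: add_increasing2)
next
  case False
  then have "V powr p \<le> V powr (real N)" using assms by (intro powr_mono) auto
  also have "\<dots> = V^N" using False by (simp add: powr_realpow)
  finally show ?thesis by simp
qed

lemma pow4_nn: "0 \<le> (y::real)^(4*N)"
  by (simp add: power_mult zero_le_even_power)

lemma claimA:
  fixes c :: "nat \<Rightarrow> nat \<Rightarrow> real" and p :: real and N :: nat
  assumes p: "0 < p" "p \<le> real N"
  defines "M \<equiv> 2^(4*N) * fact (4*N) * (2 * exp (1/2::real))"
  shows "(\<integral>\<^sup>+x. ennreal ((\<Sum>i\<in>{i. i < n \<and> (\<Sum>j<n. (c i j)^2) \<noteq> 0}.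
            (\<Sum>j<n. c i j * x j)^4 / (\<Sum>j<n. (c i j)^2)) powr p) \<partial>E_law n)
         \<le> ennreal ((1 + M) * (\<Sum>i<n. \<Sum>j<n. (c i j)^2) powr p)"
proof -
  define s where "s i = (\<Sum>j<n. (c i j)^2)" for i
  define I where "I = {i. i < n \<and> s i \<noteq> 0}"
  define S where "S = (\<Sum>i<n. s i)"
  define b where "b i j = c i j / sqrt (s i)" for i j
  have s_nn: "0 \<le> s i" for i unfolding s_def by (simp add: sum_nonneg)
  have finI: "finite I" unfolding I_def by auto
  have SI: "S = (\<Sum>i\<in>I. s i)"
    unfolding S_def I_def by (rule sum.mono_neutral_right) auto
  have M_nn: "0 \<le> M" unfolding M_def by simp
  show ?thesis
  proof (cases "I = {}")
    case True
    then show ?thesis unfolding s_def[symmetric] I_def[symmetric] by simp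
  next
    case False
    have spos: "0 < s i" if "i \<in> I" for i using that s_nn[of i] unfolding I_def by auto
    have Spos: "0 < S" unfolding SI using False finI spos by (intro sum_pos) auto
    have bnorm: "(\<Sum>j<n. (b i j)^2) = 1" if "i \<in> I" for i
    proof -
      have "(\<Sum>j<n. (b i j)^2) = (\<Sum>j<n. (c i j)^2) / s i"
        unfolding b_def using spos[OF that] by (simp add: power_divide sum_divide_distrib)
      then show ?thesis using spos[OF that] unfolding s_def by simp
    qed
    have term_eq: "(\<Sum>j<n. c i j * x j)^4 / s i = s i * (\<Sum>j<n. b i j * x j)^4" if "i \<in> I" for i x
    proof -
      have "(\<Sum>j<n. c i j * x j) = sqrt (s i) * (\<Sum>j<n. b i j * x j)"
        unfolding b_def using spos[OF that] by (simp add: sum_distrib_left)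
      then have "(\<Sum>j<n. c i j * x j)^4 = (sqrt (s i))^4 * (\<Sum>j<n. b i j * x j)^4"
        by (simp add: power_mult_distrib)
      also have "(sqrt (s i))^4 = (s i)^2" using s_nn[of i]
        by (metis power2_eq_square real_sqrt_pow2 power_mult numeral_Bit0 mult_2 numeral_One one_add_one power2_eq_square)
      finally show ?thesis using spos[OF that] by (simp add: power2_eq_square)
    qed
    define coef where "coef i = S powr p * (s i / S)" for i
    have coef_nn: "0 \<le> coef i" for i unfolding coef_def using Spos s_nn by simp
    have pw: "(\<Sum>i\<in>I. (\<Sum>j<n. c i j * x j)^4 / s i) powr p
        \<le> S powr p + (\<Sum>i\<in>I. coef i * (\<Sum>j<n. b i j * x j)^(4*N))" for x
    proof -
      define V where "V = (\<Sum>i\<in>I. (s i / S) * (\<Sum>j<n. b i j * x j)^4)"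
      have V_nn: "0 \<le> V" unfolding V_def using Spos s_nn by (intro sum_nonneg) simp
      have "(\<Sum>i\<in>I. (\<Sum>j<n. c i j * x j)^4 / s i) = S * V"
        unfolding V_def sum_distrib_left using Spos by (intro sum.cong) (auto simp: term_eq)
      then have "(\<Sum>i\<in>I. (\<Sum>j<n. c i j * x j)^4 / s i) powr p = S powr p * V powr p"
        using Spos V_nn by (simp add: powr_mult)
      also have "\<dots> \<le> S powr p * (1 + V^N)"
        using powr_le_1_pow[OF V_nn p] by (intro mult_left_mono) auto
      also have "V^N \<le> (\<Sum>i\<in>I. (s i / S) * ((\<Sum>j<n. b i j * x j)^4)^N)"
        unfolding V_def
      proof (rule jensen_pow[OF finI False])
        show "(\<Sum>i\<in>I. s i / S) = 1" using Spos unfolding SI by (simp add: sum_divide_distrib[symmetric])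
      qed (use Spos s_nn in auto)
      finally have "(\<Sum>i\<in>I. (\<Sum>j<n. c i j * x j)^4 / s i) powr p
          \<le> S powr p * (1 + (\<Sum>i\<in>I. (s i / S) * ((\<Sum>j<n. b i j * x j)^4)^N))"
        by (simp add: mult_left_mono)
      also have "\<dots> = S powr p + (\<Sum>i\<in>I. coef i * (\<Sum>j<n. b i j * x j)^(4*N))"
        unfolding coef_def by (simp add: algebra_simps sum_distrib_left power_mult[symmetric])
      finally show ?thesis .
    qed
    have "(\<integral>\<^sup>+x. ennreal ((\<Sum>i\<in>I. (\<Sum>j<n. c i j * x j)^4 / s i) powr p) \<partial>E_law n)
       \<le> (\<integral>\<^sup>+x. ennreal (S powr p) + (\<Sum>i\<in>I. ennreal (coef i) * ennreal ((\<Sum>j<n. b i j * x j)^(4*N))) \<partial>E_law n)"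
    proof (intro nn_integral_mono)
      fix x :: "nat \<Rightarrow> real"
      have "ennreal ((\<Sum>i\<in>I. (\<Sum>j<n. c i j * x j)^4 / s i) powr p)
          \<le> ennreal (S powr p + (\<Sum>i\<in>I. coef i * (\<Sum>j<n. b i j * x j)^(4*N)))"
        by (rule ennreal_leI[OF pw])
      also have "\<dots> = ennreal (S powr p) + (\<Sum>i\<in>I. ennreal (coef i) * ennreal ((\<Sum>j<n. b i j * x j)^(4*N)))"
        using coef_nn
        by (simp add: ennreal_plus sum_nonneg pow4_nn mult_nonneg_nonneg ennreal_mult'' sum_ennreal[symmetric]
                 del: sum_ennreal)
      finally show "ennreal ((\<Sum>i\<in>I. (\<Sum>j<n. c i j * x j)^4 / s i) powr p)
          \<le> ennreal (S powr p) + (\<Sum>i\<in>I. ennreal (coef i) * ennreal ((\<Sum>j<n. b i j * x j)^(4*N)))" .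
    qed
    also have "\<dots> = ennreal (S powr p) * emeasure (E_law n) (space (E_law n))
        + (\<Sum>i\<in>I. ennreal (coef i) * (\<integral>\<^sup>+x. ennreal ((\<Sum>j<n. b i j * x j)^(4*N)) \<partial>E_law n))"
      unfolding E_law_def
      by (subst nn_integral_add) (auto simp: nn_integral_sum nn_integral_cmult)
    also have "\<dots> \<le> ennreal (S powr p) * 1 + (\<Sum>i\<in>I. ennreal (coef i) * ennreal M)"
      unfolding M_def
      by (intro add_mono mult_left_mono sum_mono E_law_total E_law_moment) (auto simp: bnorm)
    also have "\<dots> = ennreal (S powr p + (\<Sum>i\<in>I. coef i) * M)"
      using coef_nn M_nn
      by (simp add: ennreal_plus sum_nonneg ennreal_mult'' sum_distrib_right sum_ennreal[symmetric] del: sum_ennreal)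
    also have "(\<Sum>i\<in>I. coef i) = S powr p"
      unfolding coef_def using Spos by (simp add: sum_distrib_left[symmetric] sum_divide_distrib[symmetric] SI[symmetric])
    also have "S powr p + S powr p * M = (1 + M) * S powr p" by (simp add: algebra_simps)
    finally show ?thesis unfolding s_def[symmetric] I_def[symmetric] S_def[symmetric] .
  qed
qed

theorem lemma5p2:
  fixes q :: real
  assumes "q \<ge> 1"
  shows "\<exists>C. \<forall>n m (a :: nat \<Rightarrow> nat \<Rightarrow> nat \<Rightarrow> real).
           (\<integral>\<^sup>+ x. ennreal (phi_A q n m a x) \<partial>(E_law n)) \<le> ennreal (C * sqrt (W_A q n m a))"
proof -
  define p where "p = q/2"
  define N where "N = nat \<lceil>p\<rceil>"
  define M where "M = 2^(4*N) * fact (4*N) * (2 * exp (1/2::real))"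
  have p_pos: "0 < p" unfolding p_def using assms by simp
  have pN: "p \<le> real N" unfolding N_def by (rule real_nat_ceiling_ge)
  have M_nn: "0 \<le> M" unfolding M_def by simp
  show ?thesis
  proof (intro exI[of _ "2 + M"] allI)
    fix n m :: nat and a :: "nat \<Rightarrow> nat \<Rightarrow> nat \<Rightarrow> real"
    define I where "I k = {i. i < n \<and> (\<Sum>j<n. (a i j k)^2) \<noteq> 0}" for k
    define T where "T k x = (\<Sum>i\<in>I k. (\<Sum>j<n. a i j k * x j)^4 / (\<Sum>j<n. (a i j k)^2)) powr p" for k x
    define S where "S k = (\<Sum>i<n. \<Sum>j<n. (a i j k)^2)" for k
    define X where "X = (\<Sum>k<m. S k powr p)"
    have S_nn: "0 \<le> S k" for k unfolding S_def by (intro sum_nonneg) auto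
    have T_nn: "0 \<le> T k x" for k x unfolding T_def by simp
    have X_nn: "0 \<le> X" unfolding X_def by (intro sum_nonneg) auto
    have phi_eq: "phi_A q n m a x = (\<Sum>k<m. T k x) powr (1/(2*q))" for x
      unfolding phi_A_def T_def I_def p_def ..
    have W_eq: "W_A q n m a = X powr (1/q)"
      unfolding W_A_def X_def S_def p_def ..
    have intT: "(\<integral>\<^sup>+x. ennreal (T k x) \<partial>E_law n) \<le> ennreal ((1 + M) * S k powr p)" for k
      unfolding T_def I_def S_def M_def using claimA[OF p_pos pN, where c="\<lambda>i j. a i j k" and n=n] by simp
    show "(\<integral>\<^sup>+ x. ennreal (phi_A q n m a x) \<partial>(E_law n)) \<le> ennreal ((2 + M) * sqrt (W_A q n m a))"
    proof (cases "X = 0")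
      case True
      have "T k x = 0" if "k < m" for k x
      proof -
        have "S k powr p = 0" using True that unfolding X_def
          using sum_nonneg_eq_0_iff[of "{..<m}" "\<lambda>k. S k powr p"] by auto
        then have Sk: "S k = 0" by simp
        have "I k = {}"
        proof (rule ccontr)
          assume "I k \<noteq> {}"
          then obtain i where i: "i < n" "(\<Sum>j<n. (a i j k)^2) \<noteq> 0" unfolding I_def by auto
          have "(\<Sum>j<n. (a i j k)^2) \<le> S k" unfolding S_def using i
            by (intro member_le_sum) (auto intro: sum_nonneg)
          moreover have "0 \<le> (\<Sum>j<n. (a i j k)^2)" by (intro sum_nonneg) auto
          ultimately show False using i Sk by simp
        qed
        then show ?thesis unfolding T_def by simp
      qed
      then have "phi_A q n m a x = 0" for x unfolding phi_eq by simp
      then show ?thesis by simp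
    next
      case False
      then have Xpos: "0 < X" using X_nn by simp
      define w where "w = sqrt (W_A q n m a)"
      have Wpos: "0 < W_A q n m a" unfolding W_eq using Xpos by simp
      have wpos: "0 < w" unfolding w_def using Wpos by simp
      have w2q: "w powr (2*q) = X"
      proof -
        have "w powr (2*q) = (W_A q n m a powr (1/2)) powr (2*q)"
          unfolding w_def using Wpos by (simp add: powr_half_sqrt)
        also have "\<dots> = W_A q n m a powr q" by (simp add: powr_powr)
        also have "\<dots> = X" unfolding W_eq using Xpos assms by (simp add: powr_powr)
        finally show ?thesis .
      qed
      have pw: "phi_A q n m a x \<le> w + (w / X) * (\<Sum>k<m. T k x)" for x
      proof -
        define Y where "Y = (\<Sum>k<m. T k x)"
        have Y_nn: "0 \<le> Y" unfolding Y_def by (intro sum_nonneg T_nn)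
        define f where "f = Y powr (1/(2*q))"
        have f_eq: "phi_A q n m a x = f" unfolding phi_eq f_def Y_def ..
        have rhs: "w \<le> w + (w / X) * Y" using wpos Xpos Y_nn by simp
        show ?thesis
        proof (cases "f \<le> w")
          case True then show ?thesis using rhs f_eq Y_def by simp
        next
          case False
          then have fpos: "0 < f" using wpos by simp
          then have Ypos: "0 < Y" unfolding f_def using Y_nn by (cases "Y = 0") auto
          have g1: "1 \<le> f / w" using False wpos by simp
          have "f / w = (f / w) powr 1" using g1 fpos wpos by simp
          also have "\<dots> \<le> (f / w) powr (2*q)" using g1 assms by (intro powr_mono) auto
          also have "\<dots> = f powr (2*q) / w powr (2*q)" using fpos wpos by (simp add: powr_divide)
          also have "f powr (2*q) = Y" unfolding f_def using Ypos assms by (simp add: powr_powr)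
          finally have "f / w \<le> Y / X" using w2q by simp
          then have "f \<le> w * (Y / X)" using wpos by (simp add: field_simps)
          then show ?thesis using f_eq Y_def wpos by (simp add: field_simps add_increasing)
        qed
      qed
      have "(\<integral>\<^sup>+ x. ennreal (phi_A q n m a x) \<partial>(E_law n))
          \<le> (\<integral>\<^sup>+ x. ennreal w + ennreal (w / X) * (\<Sum>k<m. ennreal (T k x)) \<partial>(E_law n))"
      proof (intro nn_integral_mono)
        fix x
        have "ennreal (phi_A q n m a x) \<le> ennreal (w + (w / X) * (\<Sum>k<m. T k x))"
          by (rule ennreal_leI[OF pw])
        also have "\<dots> = ennreal w + ennreal (w / X) * (\<Sum>k<m. ennreal (T k x))"
        proof -
          have e1: "(\<Sum>k<m. ennreal (T k x)) = ennreal (\<Sum>k<m. T k x)"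
            using T_nn by (simp add: sum_ennreal)
          have e2: "ennreal (w / X) * ennreal (\<Sum>k<m. T k x) = ennreal ((w / X) * (\<Sum>k<m. T k x))"
            using T_nn by (intro ennreal_mult''[symmetric] sum_nonneg) auto
          show ?thesis unfolding e1 e2 using wpos Xpos T_nn
            by (intro ennreal_plus) (auto intro!: sum_nonneg mult_nonneg_nonneg divide_nonneg_pos)
        qed
        finally show "ennreal (phi_A q n m a x) \<le> ennreal w + ennreal (w / X) * (\<Sum>k<m. ennreal (T k x))" .
      qed
      also have "\<dots> = ennreal w * emeasure (E_law n) (space (E_law n))
           + ennreal (w / X) * (\<Sum>k<m. (\<integral>\<^sup>+x. ennreal (T k x) \<partial>E_law n))"
      proof -
        have meas: "(\<lambda>x. ennreal (T k x)) \<in> borel_measurable (E_law n)" for k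
          unfolding E_law_def T_def by measurable
        have meas2: "(\<lambda>x. (\<Sum>k<m. ennreal (T k x))) \<in> borel_measurable (E_law n)"
          using meas by (intro borel_measurable_sum) auto
        have "(\<integral>\<^sup>+ x. ennreal w + ennreal (w / X) * (\<Sum>k<m. ennreal (T k x)) \<partial>(E_law n))
            = (\<integral>\<^sup>+ x. ennreal w \<partial>(E_law n)) + (\<integral>\<^sup>+ x. ennreal (w / X) * (\<Sum>k<m. ennreal (T k x)) \<partial>(E_law n))"
          by (rule nn_integral_add) (use meas2 in auto)
        also have "(\<integral>\<^sup>+ x. ennreal (w / X) * (\<Sum>k<m. ennreal (T k x)) \<partial>(E_law n))
            = ennreal (w / X) * (\<integral>\<^sup>+ x. (\<Sum>k<m. ennreal (T k x)) \<partial>(E_law n))"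
          by (rule nn_integral_cmult[OF meas2])
        also have "(\<integral>\<^sup>+ x. (\<Sum>k<m. ennreal (T k x)) \<partial>(E_law n)) = (\<Sum>k<m. (\<integral>\<^sup>+x. ennreal (T k x) \<partial>E_law n))"
          by (rule nn_integral_sum) (use meas in auto)
        finally show ?thesis by (simp only: nn_integral_const)
      qed
      also have "\<dots> \<le> ennreal w * 1 + ennreal (w / X) * (\<Sum>k<m. ennreal ((1 + M) * S k powr p))"
        by (intro add_mono mult_left_mono sum_mono E_law_total intT) auto
      also have "\<dots> = ennreal (w + (w / X) * ((1 + M) * X))"
      proof -
        have e1: "(\<Sum>k<m. ennreal ((1 + M) * S k powr p)) = ennreal ((1 + M) * X)"
          unfolding X_def sum_distrib_left using M_nn by (subst sum_ennreal) auto
        have e2: "ennreal (w / X) * ennreal ((1 + M) * X) = ennreal ((w / X) * ((1 + M) * X))"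
          using M_nn X_nn by (intro ennreal_mult''[symmetric]) auto
        show ?thesis unfolding e1 e2 using wpos Xpos M_nn
          by (simp only: mult_1_right, intro ennreal_plus[symmetric]) auto
      qed
      also have "w + (w / X) * ((1 + M) * X) = (2 + M) * w" using Xpos by (simp add: field_simps)
      finally show ?thesis unfolding w_def .
    qed
  qed
qed

end
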